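(* Let $F$ be a probability distribution on the non-negative integers with bounded support, write $p_j=F(\{j\})$ and $u=\max\{j:p_j>0\}$. In the Coin Toss (CT) model with degree distribution $F$, the total length $T$ of all edges at the origin satisfies $\mathbb{E}[T]=u^2$.
   Context: CT model: independently for each $i\in\mathbb{Z}$ let $D_i\sim F$, and attach $D_i$ stubs $s_{i,1},\dots,s_{i,D_i}$ to vertex $i$. For $j\ge1$ let $\Gamma_j=\{i\in\mathbb{Z}:D_i\ge j\}$; the stubs $s_{i,j}$, $i\in\Gamma_j$, form level $j$. For each level $j$ separately (with independent fair coin tosses, independent of the degrees) the level-$j$ stubs are given directions so that along $\Gamma_j$ (in increasing order) the directions alternate right, left, right, left, \dots, the direction of the stub at the first vertex $i\ge 0$ of $\Gamma_j$ being right or left according to a fair coin. A level-$j$ stub at $i$ pointing right (left) is joined to the level-$j$ stub at the $(2j-1)$-th vertex of $\Gamma_j$ to the right (left) of $i$ (which points in the opposite direction), producing an edge. The length of an edge $\{i,k\}$ is $|i-k|$, and $T$ is the total length of all edges at vertex $0$. *)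

theory Defs
  imports "HOL-Probability.Probability"
begin

text \<open>Coin Toss (CT) model. A sample point is a pair (D, c): D i is the degree of
  vertex i (i.i.d. with law F) and c j is the fair coin of level j (True = right).\<close>

definition CT_space :: "nat pmf \<Rightarrow> ((int \<Rightarrow> nat) \<times> (nat \<Rightarrow> bool)) measure" where
  "CT_space F = (PiM UNIV (\<lambda>_::int. measure_pmf F)) \<Otimes>\<^sub>M
                 (PiM UNIV (\<lambda>_::nat. measure_pmf (bernoulli_pmf (1/2))))"

definition Gamma :: "(int \<Rightarrow> nat) \<Rightarrow> nat \<Rightarrow> int set" where
  "Gamma D j = {i. j \<le> D i}"

text \<open>The n-th vertex of S strictly to the right / left of i (default i if it does not exist).\<close>
definition nth_right :: "int set \<Rightarrow> int \<Rightarrow> nat \<Rightarrow> int" where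
  "nth_right S i n =
     (if \<exists>k. k \<in> S \<and> i < k \<and> card {m \<in> S. i < m \<and> m \<le> k} = n
      then (THE k. k \<in> S \<and> i < k \<and> card {m \<in> S. i < m \<and> m \<le> k} = n) else i)"

definition nth_left :: "int set \<Rightarrow> int \<Rightarrow> nat \<Rightarrow> int" where
  "nth_left S i n =
     (if \<exists>k. k \<in> S \<and> k < i \<and> card {m \<in> S. k \<le> m \<and> m < i} = n
      then (THE k. k \<in> S \<and> k < i \<and> card {m \<in> S. k \<le> m \<and> m < i} = n) else i)"

definition first_nonneg :: "int set \<Rightarrow> int" where
  "first_nonneg S = (if \<exists>i\<in>S. 0 \<le> i then (LEAST i. i \<in> S \<and> 0 \<le> i) else 0)"

text \<open>Position of i in S (in increasing order), the first vertex \<ge> 0 having position 0.\<close>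
definition stub_index :: "int set \<Rightarrow> int \<Rightarrow> int" where
  "stub_index S i =
     (let g = first_nonneg S in
      if g \<le> i then int (card {m \<in> S. g \<le> m \<and> m < i})
      else - int (card {m \<in> S. i \<le> m \<and> m < g}))"

text \<open>Directions alternate along Gamma_j; the stub at the first vertex \<ge> 0 points right iff c j.\<close>
definition points_right :: "(int \<Rightarrow> nat) \<Rightarrow> (nat \<Rightarrow> bool) \<Rightarrow> int \<Rightarrow> nat \<Rightarrow> bool" where
  "points_right D c i j = (even (stub_index (Gamma D j) i) \<longleftrightarrow> c j)"

definition partner :: "(int \<Rightarrow> nat) \<Rightarrow> (nat \<Rightarrow> bool) \<Rightarrow> int \<Rightarrow> nat \<Rightarrow> int" where
  "partner D c i j =
     (if points_right D c i j then nth_right (Gamma D j) i (2*j - 1)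
      else nth_left (Gamma D j) i (2*j - 1))"

definition CT_T :: "(int \<Rightarrow> nat) \<times> (nat \<Rightarrow> bool) \<Rightarrow> nat" where
  "CT_T \<omega> = (\<Sum>j\<in>{1..fst \<omega> 0}. nat \<bar>partner (fst \<omega>) (snd \<omega>) 0 j - 0\<bar>)"

end

theory Submission
  imports Defs
begin

lemma least_count:
  fixes c :: "nat \<Rightarrow> nat" and P :: "nat \<Rightarrow> bool"
  assumes c0: "c 0 = 0" and cS: "\<And>k. c (Suc k) = c k + (if P (Suc k) then 1 else 0)"
    and n: "1 \<le> n" and ex: "\<exists>k. n \<le> c k"
  defines "K \<equiv> LEAST k. n \<le> c k"
  shows "P K" "0 < K" "c K = n" "\<And>k. P k \<Longrightarrow> c k = n \<Longrightarrow> k = K"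
    "\<And>k. c k < n \<longleftrightarrow> k < K"
proof -
  have mono: "a \<le> b \<Longrightarrow> c a \<le> c b" for a b
    by (rule lift_Suc_mono_le[of c]) (auto simp: cS)
  have nK: "n \<le> c K" unfolding K_def using ex by (rule LeastI_ex)
  have ltK: "k < K \<Longrightarrow> c k < n" for k unfolding K_def using not_less_Least by (metis not_le)
  have geK: "K \<le> k \<Longrightarrow> n \<le> c k" for k using mono[of K k] nK by simp
  show lt: "c k < n \<longleftrightarrow> k < K" for k using ltK geK by (meson not_le)
  have "K \<noteq> 0"
  proof
    assume "K = 0" with nK c0 n show False by simp
  qed
  then obtain K0 where K0: "K = Suc K0" by (cases K) auto
  have "c K0 < n" using ltK K0 by simp
  then have PK: "P K" and cK: "c K = n" using nK cS[of K0] K0 by (auto split: if_splits)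
  show "P K" "c K = n" by fact+
  show "0 < K" using K0 by simp
  fix k assume Pk: "P k" and ck: "c k = n"
  have "K \<le> k" using lt[of k] ck by simp
  moreover have "\<not> K < k"
  proof
    assume "K < k"
    then obtain k0 where k0: "k = Suc k0" "K \<le> k0" by (cases k) auto
    then have "c k = c k0 + 1" using cS[of k0] Pk by simp
    with mono[OF k0(2)] cK ck show False by simp
  qed
  ultimately show "k = K" by simp
qed

definition cR :: "int set \<Rightarrow> nat \<Rightarrow> nat" where
  "cR G k = card {m \<in> G. 0 < m \<and> m \<le> int k}"
definition cL :: "int set \<Rightarrow> nat \<Rightarrow> nat" where
  "cL G k = card {m \<in> G. - int k \<le> m \<and> m < 0}"

lemma cR_0: "cR G 0 = 0" unfolding cR_def
  by (metis (no_types, lifting) card.empty empty_Collect_eq int_ops(1) linorder_not_less)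

lemma cR_Suc: "cR G (Suc k) = cR G k + (if int (Suc k) \<in> G then 1 else 0)"
proof -
  have fin: "finite {m \<in> G. 0 < m \<and> m \<le> int k}"
    by (rule finite_subset[of _ "{0..int k}"]) auto
  have "{m \<in> G. 0 < m \<and> m \<le> int (Suc k)} =
     (if int (Suc k) \<in> G then insert (int (Suc k)) {m \<in> G. 0 < m \<and> m \<le> int k} else {m \<in> G. 0 < m \<and> m \<le> int k})"
    by (auto simp: order_le_less)
  then show ?thesis unfolding cR_def using fin by (simp add: card_insert_if)
qed

lemma cL_0: "cL G 0 = 0"
proof -
  have "{m \<in> G. - int 0 \<le> m \<and> m < 0} = {}" by auto
  then show ?thesis unfolding cL_def by simp
qed

lemma cL_Suc: "cL G (Suc k) = cL G k + (if - int (Suc k) \<in> G then 1 else 0)"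
proof -
  have fin: "finite {m \<in> G. - int k \<le> m \<and> m < 0}"
    by (rule finite_subset[of _ "{- int k..0}"]) auto
  have "{m \<in> G. - int (Suc k) \<le> m \<and> m < 0} =
     (if - int (Suc k) \<in> G then insert (- int (Suc k)) {m \<in> G. - int k \<le> m \<and> m < 0} else {m \<in> G. - int k \<le> m \<and> m < 0})"
    by (auto simp: order_le_less)
  then show ?thesis unfolding cL_def using fin by (simp add: card_insert_if)
qed

lemma nth_right_eq:
  assumes n: "1 \<le> n" and ex: "\<exists>k. n \<le> cR G k"
  shows "nth_right G 0 n = int (LEAST k. n \<le> cR G k)"
    and "\<And>k. cR G k < n \<longleftrightarrow> k < (LEAST k. n \<le> cR G k)"
proof -
  let ?K = "LEAST k. n \<le> cR G k"
  note L = least_count[of "cR G" "\<lambda>k. int k \<in> G", OF cR_0 cR_Suc n ex]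
  show "cR G k < n \<longleftrightarrow> k < ?K" for k using L(5) .
  have P: "int ?K \<in> G \<and> 0 < int ?K \<and> card {m \<in> G. 0 < m \<and> m \<le> int ?K} = n"
    using L(1-3) unfolding cR_def by auto
  have U: "k = int ?K" if "k \<in> G \<and> 0 < k \<and> card {m \<in> G. 0 < m \<and> m \<le> k} = n" for k
  proof -
    have k: "k = int (nat k)" using that by simp
    have "nat k = ?K" using that k by (intro L(4)) (auto simp: cR_def)
    then show ?thesis using k by simp
  qed
  have "(THE k. k \<in> G \<and> 0 < k \<and> card {m \<in> G. 0 < m \<and> m \<le> k} = n) = int ?K"
    using P U by (intro the_equality) auto
  moreover have "\<exists>k. k \<in> G \<and> 0 < k \<and> card {m \<in> G. 0 < m \<and> m \<le> k} = n" using P by blast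
  ultimately show "nth_right G 0 n = int ?K" unfolding nth_right_def by simp
qed

lemma nth_left_eq:
  assumes n: "1 \<le> n" and ex: "\<exists>k. n \<le> cL G k"
  shows "nth_left G 0 n = - int (LEAST k. n \<le> cL G k)"
    and "\<And>k. cL G k < n \<longleftrightarrow> k < (LEAST k. n \<le> cL G k)"
proof -
  let ?K = "LEAST k. n \<le> cL G k"
  note L = least_count[of "cL G" "\<lambda>k. - int k \<in> G", OF cL_0 cL_Suc n ex]
  show "cL G k < n \<longleftrightarrow> k < ?K" for k using L(5) .
  have P: "- int ?K \<in> G \<and> - int ?K < 0 \<and> card {m \<in> G. - int ?K \<le> m \<and> m < 0} = n"
    using L(1-3) unfolding cL_def by auto
  have U: "k = - int ?K" if "k \<in> G \<and> k < 0 \<and> card {m \<in> G. k \<le> m \<and> m < 0} = n" for k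
  proof -
    have k: "k = - int (nat (-k))" using that by simp
    have "nat (-k) = ?K" using that k by (intro L(4)) (auto simp: cL_def)
    then show ?thesis using k by simp
  qed
  have "(THE k. k \<in> G \<and> k < 0 \<and> card {m \<in> G. k \<le> m \<and> m < 0} = n) = - int ?K"
    using P U by (intro the_equality) auto
  moreover have "\<exists>k. k \<in> G \<and> k < 0 \<and> card {m \<in> G. k \<le> m \<and> m < 0} = n" using P by blast
  ultimately show "nth_left G 0 n = - int ?K" unfolding nth_left_def by simp
qed

lemma points_right_0:
  assumes "j \<le> D 0"
  shows "points_right D c 0 j = c j"
proof -
  have fn: "first_nonneg (Defs.Gamma D j) = 0"
    unfolding first_nonneg_def Gamma_def using assms
    by (auto intro!: Least_equality)
  have e: "{m \<in> Defs.Gamma D j. 0 \<le> m \<and> m < 0} = {}" by auto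
  have cz: "card {m \<in> Defs.Gamma D j. 0 \<le> m \<and> m < 0} = 0" by (subst e) simp
  show ?thesis unfolding points_right_def stub_index_def Let_def fn cz by simp
qed


lemma space_PD[simp]: "space (PiM UNIV (\<lambda>_::'i. measure_pmf (F::'a pmf))) = UNIV"
  by (simp add: space_PiM)

lemma prob_pattern:
  fixes F :: "nat pmf" and S :: "int set" and A :: "nat set"
  assumes S: "finite S" "0 \<notin> S"
  defines "q \<equiv> measure F A"
  shows "(\<integral>\<^sup>+ D. indicator {D. D 0 \<in> A \<and> card {i\<in>S. D i \<in> A} < n} D \<partial>PiM UNIV (\<lambda>_::int. measure_pmf F))
    = ennreal (q * (\<Sum>m<n. real (card S choose m) * q^m * (1-q)^(card S - m)))"
proof -
  let ?M = "PiM UNIV (\<lambda>_::int. measure_pmf F)"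
  interpret P: product_prob_space "\<lambda>_::int. measure_pmf F" UNIV by unfold_locales
  define X where "X B i = (if i = 0 \<or> i \<in> B then A else - A)" for B :: "int set" and i
  define Ev where "Ev B = {x \<in> space ?M. \<forall>i\<in>insert 0 S. x i \<in> X B i}" for B
  define Bs where "Bs = {B. B \<subseteq> S \<and> card B < n}"
  have finBs: "finite Bs" unfolding Bs_def using S(1)
    by (rule finite_subset[rotated, OF finite_Pow_iff[THEN iffD2]]) auto
  have Ev_iff: "D \<in> Ev B \<longleftrightarrow> D 0 \<in> A \<and> B = {i\<in>S. D i \<in> A}" if "B \<subseteq> S" for B D
    using that S(2) unfolding Ev_def X_def by (auto split: if_splits)
  have pw: "indicator {D. D 0 \<in> A \<and> card {i\<in>S. D i \<in> A} < n} D = (\<Sum>B\<in>Bs. indicator (Ev B) D :: ennreal)" for D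
  proof -
    have "(\<Sum>B\<in>Bs. indicator (Ev B) D :: ennreal) = (\<Sum>B\<in>Bs. if D 0 \<in> A \<and> B = {i\<in>S. D i \<in> A} then 1 else 0)"
      by (intro sum.cong refl) (simp add: indicator_def Ev_iff Bs_def)
    also have "\<dots> = (if D 0 \<in> A \<and> {i\<in>S. D i \<in> A} \<in> Bs then 1 else 0)"
      using finBs by (auto simp: sum.delta')
    also have "\<dots> = indicator {D. D 0 \<in> A \<and> card {i\<in>S. D i \<in> A} < n} D"
      by (simp add: Bs_def indicator_def)
    finally show ?thesis by simp
  qed
  have Ev_sets: "Ev B \<in> sets ?M" for B unfolding Ev_def by measurable
  have eA: "emeasure (measure_pmf F) A = ennreal q" unfolding q_def
    by (simp add: measure_pmf.emeasure_eq_measure)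
  have eNA: "emeasure (measure_pmf F) (- A) = ennreal (1 - q)" unfolding q_def
    using measure_pmf.prob_compl[of A F] by (simp add: measure_pmf.emeasure_eq_measure Compl_eq_Diff_UNIV)
  have q01: "0 \<le> q" "q \<le> 1" unfolding q_def by auto
  have EvB: "emeasure ?M (Ev B) = ennreal (q * (q^card B * (1-q)^(card S - card B)))" if B: "B \<subseteq> S" for B
  proof -
    have "emeasure ?M (Ev B) = (\<Prod>i\<in>insert 0 S. emeasure (measure_pmf F) (X B i))"
      unfolding Ev_def using S by (intro P.emeasure_PiM_Collect) auto
    also have "\<dots> = (\<Prod>i\<in>insert 0 S. ennreal (if i = 0 \<or> i \<in> B then q else 1 - q))"
      by (intro prod.cong refl) (simp add: X_def eA eNA)
    also have "\<dots> = ennreal (\<Prod>i\<in>insert 0 S. (if i = 0 \<or> i \<in> B then q else 1 - q))"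
      using q01 by (intro prod_ennreal) auto
    also have "(\<Prod>i\<in>insert 0 S. (if i = 0 \<or> i \<in> B then q else 1 - q)) =
        q * (\<Prod>i\<in>S. (if i \<in> B then q else 1 - q))"
    proof -
      have "(\<Prod>i\<in>S. (if i = 0 \<or> i \<in> B then q else 1 - q)) = (\<Prod>i\<in>S. (if i \<in> B then q else 1 - q))"
        using S(2) by (intro prod.cong refl) auto
      then show ?thesis using S by (simp add: prod.insert)
    qed
    also have "(\<Prod>i\<in>S. (if i \<in> B then q else 1 - q)) = q^card (S \<inter> B) * (1-q)^card (S \<inter> - B)"
      using S by (simp add: prod.If_cases Int_def)
    also have "S \<inter> B = B" using B by auto
    also have "card (S \<inter> - B) = card S - card B"
      using B S by (metis Diff_eq card_Diff_subset finite_subset)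
    finally show ?thesis .
  qed
  have "(\<integral>\<^sup>+ D. indicator {D. D 0 \<in> A \<and> card {i\<in>S. D i \<in> A} < n} D \<partial>?M)
      = (\<integral>\<^sup>+ D. (\<Sum>B\<in>Bs. indicator (Ev B) D) \<partial>?M)" by (simp add: pw)
  also have "\<dots> = (\<Sum>B\<in>Bs. emeasure ?M (Ev B))"
    using Ev_sets by (subst nn_integral_sum) auto
  also have "\<dots> = (\<Sum>B\<in>Bs. ennreal (q * (q^card B * (1-q)^(card S - card B))))"
    by (intro sum.cong refl EvB) (auto simp: Bs_def)
  also have "\<dots> = ennreal (\<Sum>B\<in>Bs. q * (q^card B * (1-q)^(card S - card B)))"
    using q01 by (intro sum_ennreal) auto
  also have "(\<Sum>B\<in>Bs. q * (q^card B * (1-q)^(card S - card B))) =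
      (\<Sum>m<n. (\<Sum>B\<in>{B. B \<in> Bs \<and> card B = m}. q * (q^card B * (1-q)^(card S - card B))))"
    using finBs by (intro sum.group[symmetric]) (auto simp: Bs_def)
  also have "\<dots> = (\<Sum>m<n. q * (real (card S choose m) * q^m * (1-q)^(card S - m)))"
  proof (intro sum.cong refl)
    fix m assume m: "m \<in> {..<n}"
    have e: "{B. B \<in> Bs \<and> card B = m} = {B. B \<subseteq> S \<and> card B = m}" using m by (auto simp: Bs_def)
    show "(\<Sum>B\<in>{B. B \<in> Bs \<and> card B = m}. q * (q^card B * (1-q)^(card S - card B))) =
        q * (real (card S choose m) * q^m * (1-q)^(card S - m))"
      unfolding e using n_subsets[OF S(1), of m] by simp
  qed
  also have "\<dots> = q * (\<Sum>m<n. real (card S choose m) * q^m * (1-q)^(card S - m))"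
    by (simp add: sum_distrib_left)
  finally show ?thesis .
qed


lemma choose_series:
  fixes x :: real
  assumes "0 \<le> x" "x < 1"
  shows "(\<lambda>k. real (k choose m) * x^(k-m)) sums (1/(1-x)^(Suc m))"
proof (induction m)
  case 0
  then show ?case using geometric_sums[of x] assms by simp
next
  case (Suc m)
  let ?a = "\<lambda>k. real (k choose m) * x^(k-m)"
  have sa: "summable (\<lambda>k. norm (?a k))" using Suc.IH assms by (simp add: sums_summable)
  have sb: "summable (\<lambda>k. norm (x^k))" using assms by (simp add: summable_geometric)
  have "(\<lambda>k. \<Sum>i\<le>k. ?a i * x^(k-i)) sums ((\<Sum>k. ?a k) * (\<Sum>k. x^k))"
    by (rule Cauchy_product_sums[OF sa sb])
  also have "(\<Sum>k. ?a k) = 1/(1-x)^(Suc m)" using Suc.IH by (simp add: sums_iff)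
  also have "(\<Sum>k. x^k) = 1/(1-x)" using geometric_sums[of x] assms by (simp add: sums_iff)
  finally have 1: "(\<lambda>k. \<Sum>i\<le>k. ?a i * x^(k-i)) sums (1/(1-x)^(Suc (Suc m)))" by (simp add: ac_simps)
  have eq: "(\<Sum>i\<le>k. ?a i * x^(k-i)) = real (Suc k choose Suc m) * x^(Suc k - Suc m)" for k
  proof -
    have "(\<Sum>i\<le>k. ?a i * x^(k-i)) = (\<Sum>i\<le>k. real (i choose m) * x^(k-m))"
    proof (rule sum.cong[OF refl])
      fix i assume "i \<in> {..k}"
      then have ik: "i \<le> k" by simp
      show "?a i * x^(k-i) = real (i choose m) * x^(k-m)"
      proof (cases "m \<le> i")
        case True
        then have "x^(i-m) * x^(k-i) = x^(k-m)" using ik by (simp add: power_add[symmetric])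
        then show ?thesis by (simp add: mult.assoc)
      next
        case False then show ?thesis by simp
      qed
    qed
    also have "\<dots> = real (\<Sum>i\<le>k. i choose m) * x^(k-m)"
      by (simp add: sum_distrib_right)
    also have "\<dots> = real (Suc k choose Suc m) * x^(Suc k - Suc m)"
      by (simp add: sum_choose_upper)
    finally show ?thesis .
  qed
  have "(\<lambda>k. real (Suc k choose Suc m) * x^(Suc k - Suc m)) sums (1/(1-x)^(Suc (Suc m)))"
    using 1 unfolding eq .
  then have "(\<lambda>k. real (k choose Suc m) * x^(k - Suc m)) sums (1/(1-x)^(Suc (Suc m)) + real (0 choose Suc m) * x^(0 - Suc m))"
    by (subst sums_Suc_iff[symmetric]) simp
  then show ?case by simp
qed

lemma series_n:
  fixes q :: real
  assumes q: "0 < q" "q \<le> 1"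
  shows "(\<Sum>k. ennreal (q * (\<Sum>m<n. real (k choose m) * q^m * (1-q)^(k - m)))) = ennreal (real n)"
proof -
  have s1: "(\<lambda>k. real (k choose m) * q^m * (1-q)^(k - m)) sums (1/q)" for m
  proof -
    have "(\<lambda>k. q^m * (real (k choose m) * (1-q)^(k - m))) sums (q^m * (1/(1-(1-q))^(Suc m)))"
      using choose_series[of "1-q" m] q by (intro sums_mult) auto
    moreover have "q^m * (1/(1-(1-q))^(Suc m)) = 1/q" using q by (simp add: field_simps)
    ultimately show ?thesis by (simp add: ac_simps)
  qed
  have "(\<lambda>k. q * (\<Sum>m<n. real (k choose m) * q^m * (1-q)^(k - m))) sums (q * (\<Sum>m<n. 1/q))"
    using s1 by (intro sums_mult sums_sum) auto
  moreover have "q * (\<Sum>m<n. 1/q) = real n" using q by simp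
  ultimately have S: "(\<lambda>k. q * (\<Sum>m<n. real (k choose m) * q^m * (1-q)^(k - m))) sums real n" by simp
  have nn: "0 \<le> q * (\<Sum>m<n. real (k choose m) * q^m * (1-q)^(k - m))" for k
    using q by (intro mult_nonneg_nonneg sum_nonneg) auto
  show ?thesis
    using suminf_ennreal2[OF nn, of id] S by (simp add: sums_iff)
qed

lemma suminf_one_top: "(\<Sum>k::nat. (1::ennreal)) = top"
  by (simp add: suminf_eq_SUP ennreal_SUP_of_nat_eq_top)

lemma suminf_less_K: "(\<Sum>k::nat. (if k < K then 1 else 0 :: ennreal)) = ennreal (real K)"
proof -
  have "(\<Sum>k::nat. (if k < K then 1 else 0 :: ennreal)) = (\<Sum>k<K. (if k < K then 1 else 0 :: ennreal))"
    by (rule suminf_finite) auto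
  then show ?thesis by (simp add: ennreal_of_nat_eq_real_of_nat)
qed

definition Aj :: "nat \<Rightarrow> nat set" where "Aj j = {d. j \<le> d}"
definition ER :: "nat \<Rightarrow> nat \<Rightarrow> (int \<Rightarrow> nat) set" where
  "ER j k = {D. card {i\<in>{1..int k}. D i \<in> Aj j} < 2*j-1}"
definition EL :: "nat \<Rightarrow> nat \<Rightarrow> (int \<Rightarrow> nat) set" where
  "EL j k = {D. card {i\<in>{- int k..-1}. D i \<in> Aj j} < 2*j-1}"
definition RR :: "(int \<Rightarrow> nat) \<Rightarrow> nat \<Rightarrow> ennreal" where
  "RR D j = (\<Sum>k. indicator (ER j k) D)"
definition LL :: "(int \<Rightarrow> nat) \<Rightarrow> nat \<Rightarrow> ennreal" where
  "LL D j = (\<Sum>k. indicator (EL j k) D)"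

lemma cR_eq: "card {i\<in>{1..int k}. D i \<in> Aj j} = cR (Defs.Gamma D j) k"
proof -
  have "{i\<in>{1..int k}. D i \<in> Aj j} = {m \<in> Defs.Gamma D j. 0 < m \<and> m \<le> int k}"
    by (auto simp: Aj_def Gamma_def)
  then show ?thesis by (simp add: cR_def)
qed

lemma cL_eq: "card {i\<in>{- int k..-1}. D i \<in> Aj j} = cL (Defs.Gamma D j) k"
proof -
  have "{i\<in>{- int k..-1}. D i \<in> Aj j} = {m \<in> Defs.Gamma D j. - int k \<le> m \<and> m < 0}"
    by (auto simp: Aj_def Gamma_def)
  then show ?thesis by (simp add: cL_def)
qed

lemma right_len:
  assumes j: "1 \<le> j" "j \<le> D 0" and cj: "c j" and fin: "RR D j \<noteq> top"
  shows "ennreal (real (nat \<bar>partner D c 0 j - 0\<bar>)) = RR D j"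
proof -
  let ?G = "Defs.Gamma D j" and ?n = "2*j-1"
  have n: "1 \<le> ?n" using j by simp
  have RRc: "RR D j = (\<Sum>k. if cR ?G k < ?n then 1 else 0)"
    unfolding RR_def ER_def
    apply (rule arg_cong[where f=suminf])
    apply (rule ext)
    apply (simp only: indicator_def mem_Collect_eq cR_eq)
    by simp
  have ex: "\<exists>k. ?n \<le> cR ?G k"
  proof (rule ccontr)
    assume "\<not> ?thesis"
    then have "RR D j = (\<Sum>k::nat. 1)" unfolding RRc by (simp add: not_le)
    with fin suminf_one_top show False by simp
  qed
  note NR = nth_right_eq[OF n ex]
  have "partner D c 0 j = int (LEAST k. ?n \<le> cR ?G k)"
    unfolding partner_def points_right_0[of j D c, OF j(2)] using cj NR(1) by simp
  moreover have "RR D j = ennreal (real (LEAST k. ?n \<le> cR ?G k))"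
    unfolding RRc NR(2) by (rule suminf_less_K)
  ultimately show ?thesis by simp
qed

lemma left_len:
  assumes j: "1 \<le> j" "j \<le> D 0" and cj: "\<not> c j" and fin: "LL D j \<noteq> top"
  shows "ennreal (real (nat \<bar>partner D c 0 j - 0\<bar>)) = LL D j"
proof -
  let ?G = "Defs.Gamma D j" and ?n = "2*j-1"
  have n: "1 \<le> ?n" using j by simp
  have LLc: "LL D j = (\<Sum>k. if cL ?G k < ?n then 1 else 0)"
    unfolding LL_def EL_def
    apply (rule arg_cong[where f=suminf])
    apply (rule ext)
    apply (simp only: indicator_def mem_Collect_eq cL_eq)
    by simp
  have ex: "\<exists>k. ?n \<le> cL ?G k"
  proof (rule ccontr)
    assume "\<not> ?thesis"
    then have "LL D j = (\<Sum>k::nat. 1)" unfolding LLc by (simp add: not_le)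
    with fin suminf_one_top show False by simp
  qed
  note NL = nth_left_eq[OF n ex]
  have "partner D c 0 j = - int (LEAST k. ?n \<le> cL ?G k)"
    unfolding partner_def points_right_0[of j D c, OF j(2)] using cj NL(1) by simp
  moreover have "LL D j = ennreal (real (LEAST k. ?n \<le> cL ?G k))"
    unfolding LLc NL(2) by (rule suminf_less_K)
  ultimately show ?thesis by simp
qed


abbreviation PD :: "nat pmf \<Rightarrow> (int \<Rightarrow> nat) measure" where
  "PD F \<equiv> PiM UNIV (\<lambda>_::int. measure_pmf F)"
abbreviation PC :: "(nat \<Rightarrow> bool) measure" where
  "PC \<equiv> PiM UNIV (\<lambda>_::nat. measure_pmf (bernoulli_pmf (1/2)))"

lemma sets_card_pat:
  fixes S :: "int set" and A :: "nat set"
  assumes S: "finite S"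
  shows "{D::int\<Rightarrow>nat. P (card {i\<in>S. D i \<in> A})} \<in> sets (PD F)"
proof -
  define Z where "Z B = {x \<in> space (PD F). \<forall>i\<in>S. x i \<in> (if i \<in> B then A else - A)}" for B
  have Zs: "Z B \<in> sets (PD F)" for B unfolding Z_def by measurable
  have Ziff: "D \<in> Z B \<longleftrightarrow> B = {i\<in>S. D i \<in> A}" if "B \<subseteq> S" for B D
    using that unfolding Z_def by (auto split: if_splits)
  have fin: "finite {B. B \<subseteq> S \<and> P (card B)}" using S
    by (rule finite_subset[rotated, OF finite_Pow_iff[THEN iffD2]]) auto
  have "{D::int\<Rightarrow>nat. P (card {i\<in>S. D i \<in> A})} = (\<Union>B\<in>{B. B \<subseteq> S \<and> P (card B)}. Z B)"
  proof (intro equalityI subsetI)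
    fix D assume "D \<in> {D::int\<Rightarrow>nat. P (card {i\<in>S. D i \<in> A})}"
    then show "D \<in> (\<Union>B\<in>{B. B \<subseteq> S \<and> P (card B)}. Z B)"
      by (intro UN_I[of "{i\<in>S. D i \<in> A}"]) (auto simp: Ziff)
  next
    fix D assume "D \<in> (\<Union>B\<in>{B. B \<subseteq> S \<and> P (card B)}. Z B)"
    then obtain B where "B \<subseteq> S" "P (card B)" "D \<in> Z B" by auto
    then show "D \<in> {D::int\<Rightarrow>nat. P (card {i\<in>S. D i \<in> A})}" using Ziff by auto
  qed
  also have "\<dots> \<in> sets (PD F)" using fin Zs by (intro sets.finite_UN) auto
  finally show ?thesis .
qed

lemma meas_comp: "(\<lambda>D::int\<Rightarrow>nat. D i) \<in> measurable (PD F) (measure_pmf F)"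
  by (rule measurable_component_singleton) simp

lemma meas_ER: "ER j k \<in> sets (PD F)" unfolding ER_def by (rule sets_card_pat) simp
lemma meas_EL: "EL j k \<in> sets (PD F)" unfolding EL_def by (rule sets_card_pat) simp

lemma meas_RR: "(\<lambda>D. RR D j) \<in> borel_measurable (PD F)"
  unfolding RR_def using meas_ER by (intro borel_measurable_suminf_order) auto
lemma meas_LL: "(\<lambda>D. LL D j) \<in> borel_measurable (PD F)"
  unfolding LL_def using meas_EL by (intro borel_measurable_suminf_order) auto

lemma meas_ind0: "(\<lambda>D::int\<Rightarrow>nat. indicator X (D 0) :: ennreal) \<in> borel_measurable (PD F)"
  by (rule measurable_compose[OF meas_comp]) simp

lemma q_pos:
  assumes fin: "finite (set_pmf F)" and j: "j \<le> Max (set_pmf F)"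
  shows "0 < measure F (Aj j)"
proof -
  let ?u = "Max (set_pmf F)"
  have u: "?u \<in> set_pmf F" using fin by (intro Max_in) (auto simp: set_pmf_not_empty)
  have "0 < pmf F ?u" using u by (rule pmf_positive)
  also have "pmf F ?u = measure F {?u}" by (simp add: measure_pmf_single)
  also have "\<dots> \<le> measure F (Aj j)" using j by (intro measure_pmf.finite_measure_mono) (auto simp: Aj_def)
  finally show ?thesis .
qed

lemma int_R:
  assumes fin: "finite (set_pmf F)" and j: "1 \<le> j" "j \<le> Max (set_pmf F)"
  shows "(\<integral>\<^sup>+ D. indicator (Aj j) (D 0) * RR D j \<partial>PD F) = ennreal (real (2*j-1))"
proof -
  let ?q = "measure F (Aj j)" and ?n = "2*j-1"
  have pw: "indicator (Aj j) (D 0) * RR D j =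
     (\<Sum>k. indicator {D. D 0 \<in> Aj j \<and> card {i\<in>{1..int k}. D i \<in> Aj j} < ?n} D)" for D :: "int \<Rightarrow> nat"
    unfolding RR_def ennreal_suminf_cmult[symmetric]
    by (intro arg_cong[where f=suminf] ext) (simp add: indicator_def ER_def)
  have ms: "{D::int\<Rightarrow>nat. D 0 \<in> Aj j \<and> card {i\<in>{1..int k}. D i \<in> Aj j} < ?n} \<in> sets (PD F)" for k
  proof -
    have "{D::int\<Rightarrow>nat. D 0 \<in> Aj j \<and> card {i\<in>{1..int k}. D i \<in> Aj j} < ?n} =
      {D. card {i\<in>{0}. D i \<in> Aj j} = 1} \<inter> {D. card {i\<in>{1..int k}. D i \<in> Aj j} < ?n}"
    proof -
      have "{i\<in>{0::int}. D i \<in> Aj j} = (if D 0 \<in> Aj j then {0} else {})" for D :: "int \<Rightarrow> nat" by auto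
      then show ?thesis by auto
    qed
    also have "\<dots> \<in> sets (PD F)" by (intro sets.Int sets_card_pat) auto
    finally show ?thesis .
  qed
  have "(\<integral>\<^sup>+ D. indicator (Aj j) (D 0) * RR D j \<partial>PD F) =
     (\<Sum>k. \<integral>\<^sup>+ D. indicator {D. D 0 \<in> Aj j \<and> card {i\<in>{1..int k}. D i \<in> Aj j} < ?n} D \<partial>PD F)"
    unfolding pw using ms by (intro nn_integral_suminf) auto
  also have "\<dots> = (\<Sum>k. ennreal (?q * (\<Sum>m<?n. real (k choose m) * ?q^m * (1-?q)^(k - m))))"
    by (intro arg_cong[where f=suminf] ext, subst prob_pattern) auto
  also have "\<dots> = ennreal (real ?n)"
    using q_pos[OF fin j(2)] by (intro series_n) auto
  finally show ?thesis .
qed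

lemma int_L:
  assumes fin: "finite (set_pmf F)" and j: "1 \<le> j" "j \<le> Max (set_pmf F)"
  shows "(\<integral>\<^sup>+ D. indicator (Aj j) (D 0) * LL D j \<partial>PD F) = ennreal (real (2*j-1))"
proof -
  let ?q = "measure F (Aj j)" and ?n = "2*j-1"
  have pw: "indicator (Aj j) (D 0) * LL D j =
     (\<Sum>k. indicator {D. D 0 \<in> Aj j \<and> card {i\<in>{- int k..-1}. D i \<in> Aj j} < ?n} D)" for D :: "int \<Rightarrow> nat"
    unfolding LL_def ennreal_suminf_cmult[symmetric]
    by (intro arg_cong[where f=suminf] ext) (simp add: indicator_def EL_def)
  have ms: "{D::int\<Rightarrow>nat. D 0 \<in> Aj j \<and> card {i\<in>{- int k..-1}. D i \<in> Aj j} < ?n} \<in> sets (PD F)" for k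
  proof -
    have "{D::int\<Rightarrow>nat. D 0 \<in> Aj j \<and> card {i\<in>{- int k..-1}. D i \<in> Aj j} < ?n} =
      {D. card {i\<in>{0}. D i \<in> Aj j} = 1} \<inter> {D. card {i\<in>{- int k..-1}. D i \<in> Aj j} < ?n}"
    proof -
      have "{i\<in>{0::int}. D i \<in> Aj j} = (if D 0 \<in> Aj j then {0} else {})" for D :: "int \<Rightarrow> nat" by auto
      then show ?thesis by auto
    qed
    also have "\<dots> \<in> sets (PD F)" by (intro sets.Int sets_card_pat) auto
    finally show ?thesis .
  qed
  have "(\<integral>\<^sup>+ D. indicator (Aj j) (D 0) * LL D j \<partial>PD F) =
     (\<Sum>k. \<integral>\<^sup>+ D. indicator {D. D 0 \<in> Aj j \<and> card {i\<in>{- int k..-1}. D i \<in> Aj j} < ?n} D \<partial>PD F)"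
    unfolding pw using ms by (intro nn_integral_suminf) auto
  also have "\<dots> = (\<Sum>k. ennreal (?q * (\<Sum>m<?n. real (k choose m) * ?q^m * (1-?q)^(k - m))))"
    by (intro arg_cong[where f=suminf] ext, subst prob_pattern) auto
  also have "\<dots> = ennreal (real ?n)"
    using q_pos[OF fin j(2)] by (intro series_n) auto
  finally show ?thesis .
qed

lemma int_coin: "(\<integral>\<^sup>+ c. indicator {b} (c j) \<partial>PC) = ennreal (1/2)"
proof -
  interpret P: product_prob_space "\<lambda>_::nat. measure_pmf (bernoulli_pmf (1/2))" UNIV by unfold_locales
  have "(\<integral>\<^sup>+ c. indicator {b} (c j) \<partial>PC) = (\<integral>\<^sup>+ c. indicator {c\<in>space PC. c j \<in> {b}} c \<partial>PC)"
    by (intro nn_integral_cong) (auto simp: indicator_def)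
  also have "\<dots> = emeasure PC {c\<in>space PC. c j \<in> {b}}"
  proof (intro nn_integral_indicator)
    have "{c\<in>space PC. c j \<in> {b}} = (\<lambda>c. c j) -` {b} \<inter> space PC" by auto
    also have "\<dots> \<in> sets PC"
      by (rule measurable_sets[OF measurable_component_singleton]) auto
    finally show "{c\<in>space PC. c j \<in> {b}} \<in> sets PC" .
  qed
  also have "\<dots> = emeasure (measure_pmf (bernoulli_pmf (1/2))) {b}"
    by (rule P.emeasure_PiM_Collect_single) auto
  also have "\<dots> = ennreal (1/2)" by (cases b) (auto simp: emeasure_pmf_single)
  finally show ?thesis .
qed


definition tj :: "nat \<Rightarrow> (int \<Rightarrow> nat) \<times> (nat \<Rightarrow> bool) \<Rightarrow> ennreal" where
  "tj j \<omega> = indicator (Aj j) (fst \<omega> 0) *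
     (indicator {True} (snd \<omega> j) * RR (fst \<omega>) j + indicator {False} (snd \<omega> j) * LL (fst \<omega>) j)"

lemma meas_coin: "(\<lambda>c::nat\<Rightarrow>bool. indicator X (c j) :: ennreal) \<in> borel_measurable PC"
  by (rule measurable_compose[OF measurable_component_singleton]) auto

lemma meas_tj: "tj j \<in> borel_measurable (PD F \<Otimes>\<^sub>M PC)"
proof -
  have [measurable]: "(\<lambda>\<omega>. indicator (Aj j) (fst \<omega> 0) :: ennreal) \<in> borel_measurable (PD F \<Otimes>\<^sub>M PC)"
    by (rule measurable_compose[OF measurable_fst meas_ind0])
  have [measurable]: "(\<lambda>\<omega>. RR (fst \<omega>) j) \<in> borel_measurable (PD F \<Otimes>\<^sub>M PC)"
    by (rule measurable_compose[OF measurable_fst meas_RR])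
  have [measurable]: "(\<lambda>\<omega>. LL (fst \<omega>) j) \<in> borel_measurable (PD F \<Otimes>\<^sub>M PC)"
    by (rule measurable_compose[OF measurable_fst meas_LL])
  have [measurable]: "(\<lambda>\<omega>. indicator X (snd \<omega> j) :: ennreal) \<in> borel_measurable (PD F \<Otimes>\<^sub>M PC)" for X
    by (rule measurable_compose[OF measurable_snd meas_coin])
  show ?thesis unfolding tj_def by measurable
qed

lemma pD: "prob_space (PD F)" by (rule prob_space_PiM) (simp add: prob_space_measure_pmf)
lemma pC: "prob_space PC" by (rule prob_space_PiM) (simp add: prob_space_measure_pmf)

lemma int_tj:
  assumes fin: "finite (set_pmf F)" and j: "1 \<le> j" "j \<le> Max (set_pmf F)"
  shows "(\<integral>\<^sup>+ \<omega>. tj j \<omega> \<partial>(PD F \<Otimes>\<^sub>M PC)) = ennreal (real (2*j-1))"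
proof -
  interpret PCs: prob_space PC by (rule pC)
  have "(\<integral>\<^sup>+ \<omega>. tj j \<omega> \<partial>(PD F \<Otimes>\<^sub>M PC)) = (\<integral>\<^sup>+ D. \<integral>\<^sup>+ c. tj j (D, c) \<partial>PC \<partial>PD F)"
    by (rule PCs.nn_integral_fst[symmetric]) (rule meas_tj)
  also have "\<dots> = (\<integral>\<^sup>+ D. ennreal (1/2) * (indicator (Aj j) (D 0) * RR D j) +
                          ennreal (1/2) * (indicator (Aj j) (D 0) * LL D j) \<partial>PD F)"
  proof (intro nn_integral_cong)
    fix D :: "int \<Rightarrow> nat"
    let ?a = "indicator (Aj j) (D 0) * RR D j :: ennreal" and ?b = "indicator (Aj j) (D 0) * LL D j :: ennreal"
    have "(\<integral>\<^sup>+ c. tj j (D, c) \<partial>PC) = (\<integral>\<^sup>+ c. ?a * indicator {True} (c j) + ?b * indicator {False} (c j) \<partial>PC)"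
      by (intro nn_integral_cong) (simp add: tj_def algebra_simps)
    also have "\<dots> = (\<integral>\<^sup>+ c. ?a * indicator {True} (c j) \<partial>PC) + (\<integral>\<^sup>+ c. ?b * indicator {False} (c j) \<partial>PC)"
    proof (rule nn_integral_add)
      have mc: "(\<lambda>c. k * indicator X (c j) :: ennreal) \<in> borel_measurable PC" for k X
        using meas_coin[of X j] by measurable
      show "(\<lambda>c. ?a * indicator {True} (c j)) \<in> borel_measurable PC" by (rule mc)
      show "(\<lambda>c. ?b * indicator {False} (c j)) \<in> borel_measurable PC" by (rule mc)
    qed
    also have "\<dots> = ?a * ennreal (1/2) + ?b * ennreal (1/2)"
      by (simp only: nn_integral_cmult[OF meas_coin] int_coin)
    finally show "(\<integral>\<^sup>+ c. tj j (D, c) \<partial>PC) = ennreal (1/2) * ?a + ennreal (1/2) * ?b"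
      by (simp add: ac_simps)
  qed
  also have "\<dots> = ennreal (1/2) * (\<integral>\<^sup>+ D. indicator (Aj j) (D 0) * RR D j \<partial>PD F) +
                   ennreal (1/2) * (\<integral>\<^sup>+ D. indicator (Aj j) (D 0) * LL D j \<partial>PD F)"
    using meas_ind0 meas_RR meas_LL
    by (simp add: nn_integral_add nn_integral_cmult borel_measurable_times)
  also have "\<dots> = (ennreal (1/2) + ennreal (1/2)) * ennreal (real (2*j-1))"
    by (simp add: int_R[OF fin j] int_L[OF fin j] distrib_right)
  also have "ennreal (1/2) + ennreal (1/2) = ennreal (1/2 + 1/2)" by (rule ennreal_plus[symmetric]) auto
  finally show ?thesis by simp
qed

lemma sum_odd: "(\<Sum>j\<in>{1..u}. 2*j-1) = (u::nat)^2"
  by (induction u) (auto simp: power2_eq_square)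


theorem proposition2p1:
  fixes F :: "nat pmf"
  assumes "finite (set_pmf F)"
  shows "(\<integral>\<^sup>+ \<omega>. ennreal (real (CT_T \<omega>)) \<partial>(CT_space F))
           = ennreal (real (Max (set_pmf F) ^ 2))"
proof -
  note fin = assms
  let ?u = "Max (set_pmf F)"
  let ?M = "PD F \<Otimes>\<^sub>M PC"
  define g where "g \<omega> = (\<Sum>j\<in>{1..?u}. tj j \<omega>)" for \<omega>
  have M: "CT_space F = ?M" unfolding CT_space_def ..
  have gm: "g \<in> borel_measurable ?M" unfolding g_def
    using meas_tj by (intro borel_measurable_sum) auto
  have ig: "(\<integral>\<^sup>+ \<omega>. g \<omega> \<partial>?M) = ennreal (real (?u ^ 2))"
  proof -
    have "(\<integral>\<^sup>+ \<omega>. g \<omega> \<partial>?M) = (\<Sum>j\<in>{1..?u}. \<integral>\<^sup>+ \<omega>. tj j \<omega> \<partial>?M)"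
      unfolding g_def using meas_tj by (intro nn_integral_sum) auto
    also have "\<dots> = (\<Sum>j\<in>{1..?u}. ennreal (real (2*j-1)))"
      using fin by (intro sum.cong refl int_tj) auto
    also have "\<dots> = ennreal (\<Sum>j\<in>{1..?u}. real (2*j-1))"
      by (rule sum_ennreal) auto
    also have "\<dots> = ennreal (real (\<Sum>j\<in>{1..?u}. 2*j-1))"
      by (simp only: of_nat_sum)
    also have "\<dots> = ennreal (real (?u ^ 2))" by (simp only: sum_odd)
    finally show ?thesis .
  qed
  interpret PDs: prob_space "PD F" by (rule pD)
  interpret PCs: prob_space PC by (rule pC)
  interpret PP: pair_sigma_finite "PD F" PC
    by (intro pair_sigma_finite.intro PDs.sigma_finite_measure_axioms PCs.sigma_finite_measure_axioms)
  have AE1: "AE \<omega> in ?M. fst \<omega> 0 \<in> set_pmf F"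
  proof (rule PP.AE_pair_measure)
    have "{x \<in> space ?M. fst x 0 \<in> set_pmf F} = (\<lambda>\<omega>. fst \<omega> 0) -` set_pmf F \<inter> space ?M" by auto
    also have "\<dots> \<in> sets ?M"
      by (rule measurable_sets[OF measurable_compose[OF measurable_fst meas_comp]]) auto
    finally show "{x \<in> space ?M. fst x 0 \<in> set_pmf F} \<in> sets ?M" .
    interpret P: product_prob_space "\<lambda>_::int. measure_pmf F" UNIV by unfold_locales
    have "AE D in PD F. D 0 \<in> set_pmf F"
      by (rule P.AE_component) (auto simp: AE_measure_pmf)
    then show "AE x in PD F. AE y in PC. fst (x, y) 0 \<in> set_pmf F" by auto
  qed
  have AE2: "AE \<omega> in ?M. g \<omega> \<noteq> \<infinity>"
    using gm ig by (intro nn_integral_noteq_infinite) auto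
  have "AE \<omega> in ?M. ennreal (real (CT_T \<omega>)) = g \<omega>"
    using AE1 AE2
  proof eventually_elim
    fix \<omega> :: "(int \<Rightarrow> nat) \<times> (nat \<Rightarrow> bool)"
    assume h0: "fst \<omega> 0 \<in> set_pmf F" and hg: "g \<omega> \<noteq> \<infinity>"
    obtain D c where w: "\<omega> = (D, c)" by (cases \<omega>)
    have Du: "D 0 \<le> ?u" using h0 fin w by (simp add: Max_ge)
    have tj0: "tj j \<omega> = 0" if "j \<in> {1..?u} - {1..D 0}" for j
      using that w by (simp add: tj_def Aj_def)
    have tj1: "tj j \<omega> = (if c j then RR D j else LL D j)" if "j \<in> {1..D 0}" for j
      using that w by (simp add: tj_def Aj_def indicator_def)
    have gs: "g \<omega> = (\<Sum>j\<in>{1..D 0}. tj j \<omega>)"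
      unfolding g_def using Du tj0 by (intro sum.mono_neutral_right) auto
    have nt: "tj j \<omega> \<noteq> \<infinity>" if "j \<in> {1..D 0}" for j
      using hg that unfolding gs by (simp add: ennreal_sum_eq_top)
    have "ennreal (real (CT_T \<omega>)) = (\<Sum>j\<in>{1..D 0}. ennreal (real (nat \<bar>partner D c 0 j - 0\<bar>)))"
      unfolding CT_T_def w by (simp add: of_nat_sum)
    also have "\<dots> = (\<Sum>j\<in>{1..D 0}. tj j \<omega>)"
    proof (intro sum.cong refl)
      fix j assume j: "j \<in> {1..D 0}"
      show "ennreal (real (nat \<bar>partner D c 0 j - 0\<bar>)) = tj j \<omega>"
      proof (cases "c j")
        case True
        then show ?thesis using right_len[of j D c] j nt[OF j] tj1[OF j] by auto
      next
        case False
        then show ?thesis using left_len[of j D c] j nt[OF j] tj1[OF j] by auto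
      qed
    qed
    also have "\<dots> = g \<omega>" using gs by simp
    finally show "ennreal (real (CT_T \<omega>)) = g \<omega>" .
  qed
  then have "(\<integral>\<^sup>+ \<omega>. ennreal (real (CT_T \<omega>)) \<partial>?M) = (\<integral>\<^sup>+ \<omega>. g \<omega> \<partial>?M)"
    by (rule nn_integral_cong_AE)
  then show ?thesis unfolding M using ig by simp
qed

end
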